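(* Let $F$ be a finite field and let $\beta\in F((1/t))$ be algebraic of degree $d$ over $F(t)$. Then $\beta$ satisfies a Riccati equation $\beta'=a\beta^2+b\beta+c$ with $a,b,c\in F(t)$ if and only if, for every four distinct conjugates $\beta_1,\beta_2,\beta_3,\beta_4$ of $\beta$ over $F(t)$, the cross-ratio $\dfrac{(\beta_1-\beta_3)(\beta_2-\beta_4)}{(\beta_1-\beta_4)(\beta_2-\beta_3)}$ has derivative zero.
   Context: The derivative $'=d/dt$ on $F((1/t))$ is termwise differentiation; since $\beta$ is separable over $F(t)$, it extends uniquely to a derivation of the splitting field of $\beta$ over $F(t)$, and this extension is used for the conjugates of $\beta$. *)

theory Defs
  imports "HOL-Computational_Algebra.Computational_Algebra"
begin

text \<open>Model: F((1/t)) is the type of formal Laurent series \<open>'f fls\<close> in the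
variable X = 1/t (finitely many negative powers of X = finitely many positive
powers of t).\<close>

definition t_var :: "'f::field fls" where
  "t_var = fls_X_inv"

definition poly_t :: "'f::field poly \<Rightarrow> 'f fls" where
  "poly_t P = poly (map_poly fls_const P) t_var"

definition ratfun_t :: "'f::field fls set" where
  "ratfun_t = {poly_t P / poly_t Q | P Q. Q \<noteq> 0}"

text \<open>d/dt, termwise differentiation on F((1/t)). Since t = X^(-1),
d/dt = - X^2 d/dX.\<close>
definition deriv_t :: "'f::field fls \<Rightarrow> 'f fls" where
  "deriv_t f = - (fls_X ^ 2 * fls_deriv f)"

definition is_min_poly_t :: "'f::field fls poly \<Rightarrow> 'f fls \<Rightarrow> bool" where
  "is_min_poly_t p \<beta> \<longleftrightarrow>
     p \<noteq> 0 \<and> lead_coeff p = 1 \<and> (\<forall>i. coeff p i \<in> ratfun_t) \<and> poly p \<beta> = 0 \<and>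
     (\<forall>q. q \<noteq> 0 \<and> (\<forall>i. coeff q i \<in> ratfun_t) \<and> poly q \<beta> = 0 \<longrightarrow> degree p \<le> degree q)"

definition algebraic_of_degree_t :: "'f::field fls \<Rightarrow> nat \<Rightarrow> bool" where
  "algebraic_of_degree_t \<beta> d \<longleftrightarrow> (\<exists>p. is_min_poly_t p \<beta> \<and> degree p = d)"

definition ratfun_hom :: "('f::field fls \<Rightarrow> 'L::field) \<Rightarrow> bool" where
  "ratfun_hom \<phi> \<longleftrightarrow> \<phi> 0 = 0 \<and> \<phi> 1 = 1 \<and>
     (\<forall>x\<in>ratfun_t. \<forall>y\<in>ratfun_t. \<phi> (x + y) = \<phi> x + \<phi> y \<and> \<phi> (x * y) = \<phi> x * \<phi> y)"

definition splits :: "'L::field poly \<Rightarrow> bool" where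
  "splits q \<longleftrightarrow> (\<exists>c rs. q = smult c (\<Prod>r\<leftarrow>rs. [:- r, 1:]))"

definition subfield_generated :: "'L::field set \<Rightarrow> 'L set" where
  "subfield_generated S = \<Inter>{T. S \<subseteq> T \<and> 0 \<in> T \<and> 1 \<in> T \<and>
      (\<forall>x\<in>T. \<forall>y\<in>T. x + y \<in> T \<and> x * y \<in> T) \<and> (\<forall>x\<in>T. - x \<in> T \<and> inverse x \<in> T)}"

definition is_splitting_field_t :: "('f::field fls \<Rightarrow> 'L::field) \<Rightarrow> 'f fls poly \<Rightarrow> bool" where
  "is_splitting_field_t \<phi> p \<longleftrightarrow> ratfun_hom \<phi> \<and> splits (map_poly \<phi> p) \<and>
     subfield_generated (\<phi> ` ratfun_t \<union> {x. poly (map_poly \<phi> p) x = 0}) = UNIV"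

definition derivation_extending :: "('f::field fls \<Rightarrow> 'L::field) \<Rightarrow> ('L \<Rightarrow> 'L) \<Rightarrow> bool" where
  "derivation_extending \<phi> D \<longleftrightarrow>
     (\<forall>x y. D (x + y) = D x + D y) \<and> (\<forall>x y. D (x * y) = x * D y + D x * y) \<and>
     (\<forall>x\<in>ratfun_t. D (\<phi> x) = \<phi> (deriv_t x))"

definition cross_ratio :: "'L::field \<Rightarrow> 'L \<Rightarrow> 'L \<Rightarrow> 'L \<Rightarrow> 'L" where
  "cross_ratio b1 b2 b3 b4 = ((b1 - b3) * (b2 - b4)) / ((b1 - b4) * (b2 - b3))"

end

theory Submission
  imports Defs "HOL-Computational_Algebra.Field_as_Ring"
begin

definition is_der :: "('a::comm_ring_1 \<Rightarrow> 'a) \<Rightarrow> bool" where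
  "is_der D \<longleftrightarrow> (\<forall>x y. D (x+y) = D x + D y) \<and> (\<forall>x y. D (x*y) = x * D y + D x * y)"

lemma is_derD:
  assumes "is_der D"
  shows "D (x+y) = D x + D y" "D (x*y) = x * D y + D x * y"
  using assms by (auto simp: is_der_def)

lemma der_0: assumes "is_der D" shows "D 0 = 0"
proof -
  have "D (0+0) = D 0 + D 0" by (rule is_derD[OF assms])
  thus ?thesis by simp
qed

lemma der_1: assumes "is_der D" shows "D 1 = 0"
proof -
  have "D (1*1) = 1 * D 1 + D 1 * 1" by (rule is_derD[OF assms])
  thus ?thesis by simp
qed

lemma der_uminus: assumes "is_der D" shows "D (-x) = - D x"
proof -
  have "D (x + -x) = D x + D (-x)" by (rule is_derD[OF assms])
  thus ?thesis using der_0[OF assms] by (simp add: eq_neg_iff_add_eq_0 add.commute)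
qed

lemma der_diff: assumes "is_der D" shows "D (x - y) = D x - D y"
  using is_derD(1)[OF assms, of x "-y"] der_uminus[OF assms, of y] by simp

lemma der_of_nat: assumes "is_der D" shows "D (of_nat n) = 0"
  by (induction n) (auto simp: der_0[OF assms] der_1[OF assms] is_derD[OF assms])

lemma der_power: assumes "is_der D" shows "D (x ^ Suc n) = of_nat (Suc n) * x ^ n * D x"
proof (induction n)
  case 0 then show ?case by simp
next
  case (Suc n)
  have "D (x ^ Suc (Suc n)) = x * D (x ^ Suc n) + D x * x ^ Suc n"
    by (simp add: is_derD[OF assms])
  also have "\<dots> = of_nat (Suc (Suc n)) * x ^ Suc n * D x"
    unfolding Suc by (simp add: algebra_simps)
  finally show ?case .
qed

lemma der_inverse:
  fixes D :: "'a::field \<Rightarrow> 'a"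
  assumes "is_der D" "y \<noteq> 0" shows "D (inverse y) = - D y / y^2"
proof -
  have "D (y * inverse y) = y * D (inverse y) + D y * inverse y" by (rule is_derD[OF assms(1)])
  hence "0 = y * D (inverse y) + D y * inverse y" using assms der_1[OF assms(1)] by simp
  thus ?thesis using assms(2) by (simp add: field_simps power2_eq_square) (metis add.commute add_eq_0_iff2 mult.commute)
qed

lemma der_divide:
  fixes D :: "'a::field \<Rightarrow> 'a"
  assumes "is_der D" "y \<noteq> 0" shows "D (x / y) = (D x * y - x * D y) / y^2"
proof -
  have "D (x * inverse y) = x * D (inverse y) + D x * inverse y" by (rule is_derD[OF assms(1)])
  thus ?thesis using assms der_inverse[OF assms] by (simp add: field_simps power2_eq_square)
qed

lemma der_poly:
  assumes "is_der D"
  shows "D (poly q y) = poly (map_poly D q) y + poly (pderiv q) y * D y"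
proof (induction q)
  case 0 then show ?case by (simp add: der_0[OF assms])
next
  case (pCons a q)
  have "D (poly (pCons a q) y) = D a + (y * D (poly q y) + D y * poly q y)"
    by (simp add: is_derD[OF assms])
  also have "\<dots> = poly (map_poly D (pCons a q)) y + poly (pderiv (pCons a q)) y * D y"
    unfolding pCons.IH by (simp add: map_poly_pCons der_0[OF assms] pderiv_pCons algebra_simps)
  finally show ?case .
qed

definition is_rhom :: "('a::comm_ring_1 \<Rightarrow> 'b::comm_ring_1) \<Rightarrow> bool" where
  "is_rhom h \<longleftrightarrow> h 0 = 0 \<and> h 1 = 1 \<and> (\<forall>x y. h (x+y) = h x + h y) \<and> (\<forall>x y. h (x*y) = h x * h y)"

lemma is_rhomD:
  assumes "is_rhom h"
  shows "h 0 = 0" "h 1 = 1" "h (x+y) = h x + h y" "h (x*y) = h x * h y"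
  using assms by (auto simp: is_rhom_def)

lemma rhom_uminus: assumes "is_rhom h" shows "h (-x) = - h x"
proof -
  have "h (x + -x) = h x + h (-x)" by (rule is_rhomD[OF assms])
  thus ?thesis using is_rhomD(1)[OF assms] by (simp add: eq_neg_iff_add_eq_0 add.commute)
qed

lemma rhom_diff: assumes "is_rhom h" shows "h (x - y) = h x - h y"
  using is_rhomD(3)[OF assms, of x "-y"] rhom_uminus[OF assms, of y] by simp

lemma rhom_of_nat: assumes "is_rhom h" shows "h (of_nat n) = of_nat n"
  by (induction n) (auto simp: is_rhomD[OF assms])

lemma rhom_power: assumes "is_rhom h" shows "h (x ^ n) = h x ^ n"
  by (induction n) (auto simp: is_rhomD[OF assms])

lemma rhom_inverse:
  fixes h :: "'a::field \<Rightarrow> 'b::field"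
  assumes "is_rhom h" shows "h (inverse x) = inverse (h x)"
proof (cases "x = 0")
  case True then show ?thesis using is_rhomD(1)[OF assms] by simp
next
  case False
  have "h (x * inverse x) = h x * h (inverse x)" by (rule is_rhomD[OF assms])
  hence "1 = h x * h (inverse x)" using False is_rhomD(2)[OF assms] by simp
  thus ?thesis by (metis inverse_unique)
qed

lemma rhom_inj:
  fixes h :: "'a::field \<Rightarrow> 'b::field"
  assumes "is_rhom h" shows "h x = 0 \<longleftrightarrow> x = 0"
proof
  assume "h x = 0"
  show "x = 0"
  proof (rule ccontr)
    assume "x \<noteq> 0"
    have "h (x * inverse x) = h x * h (inverse x)" by (rule is_rhomD[OF assms])
    thus False using \<open>x \<noteq> 0\<close> \<open>h x = 0\<close> is_rhomD(2)[OF assms] by simp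
  qed
qed (simp add: is_rhomD[OF assms])

lemma map_poly_rhom_add: assumes "is_rhom h"
  shows "map_poly h (a + b) = map_poly h a + map_poly h b"
  by (rule poly_eqI) (simp add: coeff_map_poly is_rhomD[OF assms])

lemma map_poly_rhom_uminus: assumes "is_rhom h"
  shows "map_poly h (- a) = - map_poly h a"
  by (rule poly_eqI) (simp add: coeff_map_poly is_rhomD[OF assms] rhom_uminus[OF assms])

lemma map_poly_rhom_diff: assumes "is_rhom h"
  shows "map_poly h (a - b) = map_poly h a - map_poly h b"
  by (rule poly_eqI) (simp add: coeff_map_poly is_rhomD[OF assms] rhom_diff[OF assms])

lemma map_poly_rhom_mult: assumes "is_rhom h"
  shows "map_poly h (a * b) = map_poly h a * map_poly h b"
proof (induction a)
  case 0 then show ?case by simp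
next
  case (pCons c a)
  have "map_poly h (pCons c a * b) = map_poly h (smult c b + pCons 0 (a * b))" by simp
  also have "\<dots> = smult (h c) (map_poly h b) + pCons 0 (map_poly h a * map_poly h b)"
    by (simp add: map_poly_rhom_add[OF assms] map_poly_smult is_rhomD[OF assms] map_poly_pCons pCons.IH)
  also have "\<dots> = map_poly h (pCons c a) * map_poly h b"
    by (simp add: map_poly_pCons is_rhomD[OF assms])
  finally show ?case .
qed

lemma map_poly_rhom_1: assumes "is_rhom h" shows "map_poly h 1 = 1"
  by (simp add: is_rhomD[OF assms])

lemma map_poly_rhom_pderiv: assumes "is_rhom h"
  shows "map_poly h (pderiv a) = pderiv (map_poly h a)"
  by (rule poly_eqI) (simp add: coeff_map_poly coeff_pderiv is_rhomD[OF assms] rhom_of_nat[OF assms])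

lemma poly_map_rhom_mult: assumes "is_rhom h"
  shows "poly (map_poly h (a * b)) x = poly (map_poly h a) x * poly (map_poly h b) x"
  by (simp add: map_poly_rhom_mult[OF assms])

lemma poly_map_rhom_add: assumes "is_rhom h"
  shows "poly (map_poly h (a + b)) x = poly (map_poly h a) x + poly (map_poly h b) x"
  by (simp add: map_poly_rhom_add[OF assms])

lemma rhom_comp: assumes "is_rhom h" "is_rhom g" shows "is_rhom (g \<circ> h)"
  using assms by (simp add: is_rhom_def)

lemma rhom_fls_const: "is_rhom (fls_const :: 'a::comm_ring_1 \<Rightarrow> 'a fls)"
  by (simp add: is_rhom_def fls_plus_const)

lemma poly_t_add: "poly_t (P + Q) = poly_t P + poly_t Q"
  by (simp add: poly_t_def map_poly_rhom_add[OF rhom_fls_const])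
lemma poly_t_mult: "poly_t (P * Q) = poly_t P * poly_t Q"
  by (simp add: poly_t_def map_poly_rhom_mult[OF rhom_fls_const])
lemma poly_t_0: "poly_t 0 = 0" by (simp add: poly_t_def)
lemma poly_t_1: "poly_t 1 = 1" by (simp add: poly_t_def)

lemma rhom_poly_t: "is_rhom (poly_t :: 'a::field poly \<Rightarrow> 'a fls)"
  by (simp add: is_rhom_def poly_t_add poly_t_mult poly_t_0 poly_t_1)

lemma poly_t_nth:
  fixes P :: "'a::field poly"
  shows "fls_nth (poly_t P) (- int k) = coeff P k"
proof -
  have deg: "degree (map_poly fls_const P) = degree P"
    by (rule degree_map_poly) simp
  have "poly_t P = (\<Sum>i\<le>degree P. fls_const (coeff P i) * fls_X_inv ^ i)"
    unfolding poly_t_def t_var_def poly_altdef deg by (simp add: coeff_map_poly)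
  hence "fls_nth (poly_t P) (- int k) = (\<Sum>i\<le>degree P. coeff P i * (if - int k = - int i then 1 else 0))"
    by (simp add: fls_nth_sum)
  also have "\<dots> = (\<Sum>i\<le>degree P. if i = k then coeff P i else 0)"
    by (intro sum.cong) auto
  also have "\<dots> = coeff P k"
    by (auto simp: coeff_eq_0)
  finally show ?thesis .
qed

lemma poly_t_eq_0_iff: "poly_t (P :: 'a::field poly) = 0 \<longleftrightarrow> P = 0"
proof
  assume "poly_t P = 0"
  hence "coeff P k = 0" for k using poly_t_nth[of P k] by simp
  thus "P = 0" by (simp add: poly_eq_iff)
qed (simp add: poly_t_0)

lemma is_der_deriv_t: "is_der (deriv_t :: 'a::field fls \<Rightarrow> 'a fls)"
  by (simp add: is_der_def deriv_t_def algebra_simps)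

lemma deriv_t_const [simp]: "deriv_t (fls_const c) = 0"
  by (simp add: deriv_t_def)

lemma deriv_t_t [simp]: "deriv_t (t_var :: 'a::field fls) = 1"
proof -
  have "fls_X * (fls_X_inv :: 'a fls) = 1" by (simp add: fls_X_inv_times_conv_shift)
  thus ?thesis by (simp add: deriv_t_def t_var_def power2_eq_square algebra_simps)
qed

lemma deriv_poly_t: "deriv_t (poly_t P) = poly_t (pderiv (P :: 'a::field poly))"
proof -
  have "deriv_t (poly_t P) = poly (map_poly deriv_t (map_poly fls_const P)) t_var
      + poly (pderiv (map_poly fls_const P)) t_var * deriv_t t_var"
    unfolding poly_t_def by (rule der_poly[OF is_der_deriv_t])
  also have "map_poly deriv_t (map_poly fls_const P) = (0 :: 'a fls poly)"
    by (rule poly_eqI) (simp add: coeff_map_poly deriv_t_def)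
  also have "pderiv (map_poly fls_const P) = map_poly fls_const (pderiv P)"
    by (simp add: map_poly_rhom_pderiv[OF rhom_fls_const])
  finally show ?thesis by (simp add: poly_t_def)
qed

lemma ratfun_t_iff: "x \<in> ratfun_t \<longleftrightarrow> (\<exists>P Q. Q \<noteq> 0 \<and> x = poly_t P / poly_t Q)"
  by (auto simp: ratfun_t_def)

lemma ratfun_t_poly_t: "poly_t P \<in> ratfun_t"
  unfolding ratfun_t_iff by (rule exI[of _ P], rule exI[of _ 1]) (simp add: poly_t_1)

lemma ratfun_t_0: "0 \<in> ratfun_t" using ratfun_t_poly_t[of 0] by (simp add: poly_t_0)
lemma ratfun_t_1: "1 \<in> ratfun_t" using ratfun_t_poly_t[of 1] by (simp add: poly_t_1)

lemma ratfun_t_add: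
  assumes "x \<in> ratfun_t" "y \<in> ratfun_t" shows "x + y \<in> ratfun_t"
proof -
  from assms obtain P1 Q1 P2 Q2 where h: "Q1 \<noteq> 0" "Q2 \<noteq> 0" "x = poly_t P1 / poly_t Q1" "y = poly_t P2 / poly_t Q2"
    by (auto simp: ratfun_t_iff)
  have nz: "poly_t Q1 \<noteq> 0" "poly_t Q2 \<noteq> 0" using h by (auto simp: poly_t_eq_0_iff)
  have "x + y = poly_t (P1 * Q2 + P2 * Q1) / poly_t (Q1 * Q2)"
    using nz h by (simp add: poly_t_add poly_t_mult field_simps)
  moreover have "Q1 * Q2 \<noteq> 0" using h by simp
  ultimately show ?thesis unfolding ratfun_t_iff by blast
qed

lemma ratfun_t_mult:
  assumes "x \<in> ratfun_t" "y \<in> ratfun_t" shows "x * y \<in> ratfun_t"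
proof -
  from assms obtain P1 Q1 P2 Q2 where h: "Q1 \<noteq> 0" "Q2 \<noteq> 0" "x = poly_t P1 / poly_t Q1" "y = poly_t P2 / poly_t Q2"
    by (auto simp: ratfun_t_iff)
  have "x * y = poly_t (P1 * P2) / poly_t (Q1 * Q2)"
    using h by (simp add: poly_t_mult)
  moreover have "Q1 * Q2 \<noteq> 0" using h by simp
  ultimately show ?thesis unfolding ratfun_t_iff by blast
qed

lemma ratfun_t_uminus:
  assumes "x \<in> ratfun_t" shows "- x \<in> ratfun_t"
proof -
  from assms obtain P Q where h: "Q \<noteq> 0" "x = poly_t P / poly_t Q"
    by (auto simp: ratfun_t_iff)
  have "- x = poly_t (- P) / poly_t Q"
    using h by (simp add: rhom_uminus[OF rhom_poly_t])
  thus ?thesis using h unfolding ratfun_t_iff by blast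
qed

lemma ratfun_t_diff:
  assumes "x \<in> ratfun_t" "y \<in> ratfun_t" shows "x - y \<in> ratfun_t"
  using ratfun_t_add[OF assms(1) ratfun_t_uminus[OF assms(2)]] by simp

lemma ratfun_t_inverse:
  assumes "x \<in> ratfun_t" shows "inverse x \<in> ratfun_t"
proof -
  from assms obtain P Q where h: "Q \<noteq> 0" "x = poly_t P / poly_t Q"
    by (auto simp: ratfun_t_iff)
  show ?thesis
  proof (cases "P = 0")
    case True then show ?thesis using h ratfun_t_0 by (simp add: poly_t_0)
  next
    case False
    have "inverse x = poly_t Q / poly_t P" using h by simp
    thus ?thesis using False unfolding ratfun_t_iff by blast
  qed
qed

lemma ratfun_t_divide:
  assumes "x \<in> ratfun_t" "y \<in> ratfun_t" shows "x / y \<in> ratfun_t"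
  using ratfun_t_mult[OF assms(1) ratfun_t_inverse[OF assms(2)]] by (simp add: divide_inverse)

lemma ratfun_t_power:
  assumes "x \<in> ratfun_t" shows "x ^ n \<in> ratfun_t"
  by (induction n) (auto intro: ratfun_t_mult ratfun_t_1 assms)

lemma ratfun_t_deriv:
  assumes "x \<in> ratfun_t" shows "deriv_t x \<in> ratfun_t"
proof -
  from assms obtain P Q where h: "Q \<noteq> 0" "x = poly_t P / poly_t Q"
    by (auto simp: ratfun_t_iff)
  have nz: "poly_t Q \<noteq> 0" using h by (auto simp: poly_t_eq_0_iff)
  have "deriv_t x = (deriv_t (poly_t P) * poly_t Q - poly_t P * deriv_t (poly_t Q)) / (poly_t Q)^2"
    unfolding h(2) by (rule der_divide[OF is_der_deriv_t nz])
  also have "\<dots> = poly_t (pderiv P * Q - P * pderiv Q) / poly_t (Q^2)"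
    by (simp add: deriv_poly_t rhom_diff[OF rhom_poly_t] poly_t_mult rhom_power[OF rhom_poly_t])
  finally have e: "deriv_t x = poly_t (pderiv P * Q - P * pderiv Q) / poly_t (Q^2)" .
  have "Q^2 \<noteq> 0" using h by simp
  with e show ?thesis unfolding ratfun_t_iff by blast
qed

typedef (overloaded) ('f::field) rf = "ratfun_t :: 'f fls set"
  morphisms rep_rf abs_rf
  using ratfun_t_0 by blast

setup_lifting type_definition_rf

instantiation rf :: (field) field
begin
lift_definition zero_rf :: "'a rf" is 0 by (rule ratfun_t_0)
lift_definition one_rf :: "'a rf" is 1 by (rule ratfun_t_1)
lift_definition plus_rf :: "'a rf \<Rightarrow> 'a rf \<Rightarrow> 'a rf" is "(+)" by (rule ratfun_t_add)
lift_definition minus_rf :: "'a rf \<Rightarrow> 'a rf \<Rightarrow> 'a rf" is "(-)" by (rule ratfun_t_diff)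
lift_definition uminus_rf :: "'a rf \<Rightarrow> 'a rf" is "uminus" by (rule ratfun_t_uminus)
lift_definition times_rf :: "'a rf \<Rightarrow> 'a rf \<Rightarrow> 'a rf" is "(*)" by (rule ratfun_t_mult)
lift_definition inverse_rf :: "'a rf \<Rightarrow> 'a rf" is "inverse" by (rule ratfun_t_inverse)
lift_definition divide_rf :: "'a rf \<Rightarrow> 'a rf \<Rightarrow> 'a rf" is "(/)" by (rule ratfun_t_divide)
instance
  by standard (transfer; simp add: algebra_simps divide_inverse)+
end

lemma rhom_rep_rf: "is_rhom rep_rf"
  by (simp add: is_rhom_def zero_rf.rep_eq one_rf.rep_eq plus_rf.rep_eq times_rf.rep_eq)

lemma rep_rf_in: "rep_rf x \<in> ratfun_t" using rep_rf by blast

lemma rep_abs_rf: "x \<in> ratfun_t \<Longrightarrow> rep_rf (abs_rf x) = x" by (rule abs_rf_inverse)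

lemma rep_rf_inj: "rep_rf x = rep_rf y \<longleftrightarrow> x = y" by (rule rep_rf_inject)

lemma rep_rf_0_iff: "rep_rf x = 0 \<longleftrightarrow> x = 0"
  using rhom_inj[OF rhom_rep_rf] by blast

lemma prime_CHAR_finite: "prime CHAR('a::{field,finite})"
  using prime_CHAR_semidom[where ?'a = 'a] finite_imp_CHAR_pos[where ?'a = 'a, OF finite_UNIV] by simp

lemma frob_inj:
  fixes x y :: "'a::field"
  assumes "prime CHAR('a)" "x ^ CHAR('a) = y ^ CHAR('a)"
  shows "x = y"
proof -
  have "(x + (-y)) ^ CHAR('a) = x ^ CHAR('a) + (-y) ^ CHAR('a)"
    by (rule freshmans_dream[OF assms(1) refl])
  also have "(-y) ^ CHAR('a) = - (y ^ CHAR('a))"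
    by (rule minus_power_prime_CHAR[OF refl assms(1)])
  finally have "(x - y) ^ CHAR('a) = 0" using assms(2) by simp
  thus ?thesis by simp
qed

lemma frob_surj: "\<exists>x. x ^ CHAR('a) = (y :: 'a::{field,finite})"
proof -
  have "inj (\<lambda>x::'a. x ^ CHAR('a))"
    by (rule injI) (rule frob_inj[OF prime_CHAR_finite])
  hence "surj (\<lambda>x::'a. x ^ CHAR('a))" by (rule finite_UNIV_inj_surj[OF finite_UNIV])
  thus ?thesis by (metis surjD)
qed

lemma frob_poly:
  fixes N :: "'a::comm_ring_1 poly"
  assumes pr: "prime CHAR('a)"
    and z: "\<And>i. \<not> CHAR('a) dvd i \<Longrightarrow> coeff N i = 0"
    and r: "\<And>k. r k ^ CHAR('a) = coeff N (CHAR('a) * k)"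
  shows "N = (\<Sum>k\<le>degree N. monom (r k) k) ^ CHAR('a)"
proof -
  define q where "q = CHAR('a)"
  have q1: "q \<ge> 1" using pr prime_ge_1_nat q_def by blast
  have prp: "prime CHAR('a poly)" using pr by simp
  have "(\<Sum>k\<le>degree N. monom (r k) k) ^ CHAR('a poly) = (\<Sum>k\<le>degree N. monom (r k) k ^ CHAR('a poly))"
    by (rule freshmans_dream_sum[OF prp refl])
  hence e: "(\<Sum>k\<le>degree N. monom (r k) k) ^ q = (\<Sum>k\<le>degree N. monom (coeff N (q * k)) (q * k))"
    by (simp add: monom_power r q_def mult.commute)
  have "coeff N j = (\<Sum>k\<le>degree N. coeff (monom (coeff N (q * k)) (q * k)) j)" for j
  proof (cases "q dvd j")
    case True
    then obtain k0 where j: "j = q * k0" by blast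
    have "(\<Sum>k\<le>degree N. coeff (monom (coeff N (q * k)) (q * k)) j)
        = (\<Sum>k\<le>degree N. if k = k0 then coeff N j else 0)"
      by (intro sum.cong refl) (use q1 j in \<open>auto simp: coeff_monom\<close>)
    also have "\<dots> = coeff N j"
    proof (cases "k0 \<le> degree N")
      case False
      hence "j > degree N" using j q1
        by (metis dual_order.trans mult_le_cancel2 mult_1 not_le_imp_less)
      thus ?thesis using False by (simp add: coeff_eq_0)
    qed simp
    finally show ?thesis by simp
  next
    case False
    have "(\<Sum>k\<le>degree N. coeff (monom (coeff N (q * k)) (q * k)) j) = 0"
      by (intro sum.neutral) (use False in \<open>auto simp: coeff_monom\<close>)
    thus ?thesis using z False q_def by simp
  qed
  note h = this
  have "N = (\<Sum>k\<le>degree N. monom (coeff N (q * k)) (q * k))"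
    by (rule poly_eqI) (unfold coeff_sum, rule h)
  with e show ?thesis by (simp add: q_def)
qed

lemma pderiv_0_coeff:
  fixes N :: "'a::idom poly"
  assumes "pderiv N = 0" "\<not> CHAR('a) dvd i"
  shows "coeff N i = 0"
proof (cases i)
  case 0 then show ?thesis using assms by simp
next
  case (Suc j)
  have "of_nat (Suc j) * coeff N (Suc j) = (0::'a)"
    using arg_cong[OF assms(1), of "\<lambda>p. coeff p j"] by (simp add: coeff_pderiv)
  moreover have "of_nat (Suc j) \<noteq> (0::'a)" using assms(2) Suc of_nat_eq_0_iff_char_dvd[where ?'a='a, of "Suc j"] by metis
  ultimately show ?thesis using Suc by simp
qed

lemma of_nat_CHAR_fls: "(of_nat CHAR('a) :: 'a::comm_ring_1 fls) = 0"
  using of_nat_CHAR[where ?'a = "'a fls"] by simp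

lemma ratfun_frob:
  fixes c :: "'f::{field,finite} fls"
  assumes "c \<in> ratfun_t" "deriv_t c = 0"
  shows "\<exists>e\<in>ratfun_t. c = e ^ CHAR('f)"
proof -
  define q where "q = CHAR('f)"
  have pr: "prime q" unfolding q_def by (rule prime_CHAR_finite)
  hence q2: "q \<ge> 2" by (simp add: prime_ge_2_nat)
  from assms(1) obtain P Q where h: "Q \<noteq> 0" "c = poly_t P / poly_t Q"
    by (auto simp: ratfun_t_iff)
  have nz: "poly_t Q \<noteq> 0" using h by (simp add: poly_t_eq_0_iff)
  define N where "N = P * Q ^ (q - 1)"
  have qs: "q = Suc (q - 1)" using q2 by simp
  have "poly_t N = c * poly_t Q ^ q"
    unfolding N_def h(2) using nz
    by (subst qs) (simp add: poly_t_mult rhom_power[OF rhom_poly_t] field_simps)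
  moreover have "deriv_t (poly_t Q ^ q) = 0"
    by (subst qs, subst der_power[OF is_der_deriv_t], subst qs[symmetric]) (simp add: q_def of_nat_CHAR_fls)
  ultimately have "deriv_t (poly_t N) = 0"
    by (simp add: is_derD[OF is_der_deriv_t] assms(2))
  hence "poly_t (pderiv N) = 0" by (simp add: deriv_poly_t)
  hence dN: "pderiv N = 0" by (simp add: poly_t_eq_0_iff)
  define r where "r k = (SOME x. x ^ q = coeff N (q * k))" for k
  have r: "r k ^ q = coeff N (q * k)" for k
    unfolding r_def q_def by (rule someI_ex) (rule frob_surj)
  have "N = (\<Sum>k\<le>degree N. monom (r k) k) ^ q"
    unfolding q_def
    by (rule frob_poly) (use prime_CHAR_finite pderiv_0_coeff[OF dN] r in \<open>auto simp: q_def\<close>)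
  then obtain M where NM: "N = M ^ q" by blast
  have "c = poly_t N / poly_t Q ^ q"
    using \<open>poly_t N = c * poly_t Q ^ q\<close> nz by simp
  also have "\<dots> = (poly_t M / poly_t Q) ^ q"
    by (simp add: NM rhom_power[OF rhom_poly_t] power_divide)
  finally show ?thesis unfolding q_def
    using h(1) by (intro bexI[of _ "poly_t M / poly_t Q"]) (auto simp: ratfun_t_iff)
qed

lemma min_poly_props:
  assumes "is_min_poly_t p \<beta>"
  shows "p \<noteq> 0" "lead_coeff p = 1" "\<And>i. coeff p i \<in> ratfun_t" "poly p \<beta> = 0"
    "\<And>q. q \<noteq> 0 \<Longrightarrow> (\<And>i. coeff q i \<in> ratfun_t) \<Longrightarrow> poly q \<beta> = 0 \<Longrightarrow> degree p \<le> degree q"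
  using assms unfolding is_min_poly_t_def by blast+

lemma min_poly_degree_pos:
  assumes "is_min_poly_t p \<beta>"
  shows "degree p \<ge> 1"
proof (rule ccontr)
  assume "\<not> degree p \<ge> 1"
  hence "degree p = 0" by simp
  hence "p = [:lead_coeff p:]" by (metis degree_0_id)
  hence "p = 1" using min_poly_props(2)[OF assms] by (simp add: one_pCons)
  thus False using min_poly_props(4)[OF assms] by simp
qed

lemma minpoly_pderiv_nonzero:
  fixes \<beta> :: "'f::{field,finite} fls"
  assumes mp: "is_min_poly_t p \<beta>"
  shows "pderiv p \<noteq> 0"
proof
  assume dp: "pderiv p = 0"
  define d where "d = degree p"
  define q where "q = CHAR('f)"
  have pr: "prime q" unfolding q_def by (rule prime_CHAR_finite)
  hence q2: "q \<ge> 2" by (simp add: prime_ge_2_nat)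
  have d1: "d \<ge> 1" unfolding d_def by (rule min_poly_degree_pos[OF mp])
  note P = min_poly_props[OF mp]
  have "deriv_t (poly p \<beta>) = poly (map_poly deriv_t p) \<beta> + poly (pderiv p) \<beta> * deriv_t \<beta>"
    by (rule der_poly[OF is_der_deriv_t])
  hence r0: "poly (map_poly deriv_t p) \<beta> = 0" using dp P(4) der_0[OF is_der_deriv_t] by (metis add.right_neutral mult_zero_left poly_0)
  have cD: "coeff (map_poly deriv_t p) i = deriv_t (coeff p i)" for i
    by (simp add: coeff_map_poly der_0[OF is_der_deriv_t])
  have "map_poly deriv_t p = 0"
  proof (rule ccontr)
    assume nz: "map_poly deriv_t p \<noteq> 0"
    have "d \<le> degree (map_poly deriv_t p)"
      unfolding d_def by (rule P(5)[OF nz _ r0]) (simp add: cD ratfun_t_deriv P(3))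
    moreover have "degree (map_poly deriv_t p) < d"
    proof (rule degree_lessI, use nz in blast, intro allI impI)
      fix k assume "k \<ge> d"
      show "coeff (map_poly deriv_t p) k = 0"
      proof (cases "k = d")
        case True then show ?thesis using P(2) by (simp add: cD d_def der_1[OF is_der_deriv_t])
      next
        case False then have "coeff p k = 0" using \<open>k \<ge> d\<close> by (simp add: coeff_eq_0 d_def)
        then show ?thesis by (simp add: cD der_0[OF is_der_deriv_t])
      qed
    qed
    ultimately show False by simp
  qed
  hence dc: "deriv_t (coeff p i) = 0" for i using cD[of i] by simp
  define e where "e i = (SOME x. x \<in> ratfun_t \<and> coeff p i = x ^ q)" for i
  have e: "e i \<in> ratfun_t \<and> coeff p i = e i ^ q" for i
    unfolding e_def by (rule someI_ex) (use ratfun_frob[OF P(3) dc] in \<open>auto simp: q_def\<close>)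
  have z: "\<not> q dvd i \<Longrightarrow> coeff p i = 0" for i
    using pderiv_0_coeff[OF dp, of i] by (simp add: q_def)
  define g where "g = (\<Sum>k\<le>degree p. monom (e (q * k)) k)"
  have "p = g ^ q"
    unfolding g_def q_def
    by (rule frob_poly[where ?'a = "'f fls", simplified])
       (use prime_CHAR_finite z e in \<open>auto simp: q_def\<close>)
  hence "(poly g \<beta>) ^ q = 0" using P(4) by simp
  hence g0: "poly g \<beta> = 0" by simp
  have cg: "coeff g k = (if k \<le> d then e (q * k) else 0)" for k
    unfolding g_def d_def by (simp add: coeff_sum coeff_monom)
  have "q dvd d" using z[of d] P(2) unfolding d_def by auto
  then obtain m where dm: "d = q * m" by blast
  have "m \<noteq> 0" using dm d1 by auto
  hence "m < d" unfolding dm using q2 by (simp add: mult_le_mono1)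

  have "e d ^ q = 1" using e[of d] P(2) unfolding d_def by simp
  hence "e d \<noteq> 0" using q2 by (metis one_neq_zero power_0_left not_numeral_le_zero)
  hence "coeff g m \<noteq> 0" using cg[of m] dm \<open>m < d\<close> by simp
  hence gnz: "g \<noteq> 0" by auto
  have "degree g \<le> m"
  proof (rule degree_le, intro allI impI)
    fix k assume "m < k"
    hence "q * k > d" using dm q2 by simp
    hence "coeff p (q * k) = 0" by (simp add: coeff_eq_0 d_def)
    hence "e (q * k) ^ q = 0" using e[of "q * k"] by simp
    thus "coeff g k = 0" using cg[of k] by simp
  qed
  moreover have "d \<le> degree g"
    unfolding d_def by (rule P(5)[OF gnz _ g0]) (use e ratfun_t_0 in \<open>auto simp: cg\<close>)
  ultimately show False using \<open>m < d\<close> by simp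
qed

instantiation rf :: (field)
  "{unique_euclidean_ring, normalization_euclidean_semiring, normalization_semidom_multiplicative}"
begin
definition [simp]: "normalize_rf = (normalize_field :: 'a rf \<Rightarrow> _)"
definition [simp]: "unit_factor_rf = (unit_factor_field :: 'a rf \<Rightarrow> _)"
definition [simp]: "modulo_rf = (mod_field :: 'a rf \<Rightarrow> _)"
definition [simp]: "euclidean_size_rf = (euclidean_size_field :: 'a rf \<Rightarrow> _)"
definition [simp]: "division_segment (x :: 'a rf) = 1"
instance
  by standard
    (simp_all add: dvd_field_iff field_split_simps split: if_splits)
end

instantiation rf :: (field) euclidean_ring_gcd
begin
definition gcd_rf :: "'a rf \<Rightarrow> 'a rf \<Rightarrow> 'a rf" where
  "gcd_rf = Euclidean_Algorithm.gcd"
definition lcm_rf :: "'a rf \<Rightarrow> 'a rf \<Rightarrow> 'a rf" where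
  "lcm_rf = Euclidean_Algorithm.lcm"
definition Gcd_rf :: "'a rf set \<Rightarrow> 'a rf" where
 "Gcd_rf = Euclidean_Algorithm.Gcd"
definition Lcm_rf :: "'a rf set \<Rightarrow> 'a rf" where
 "Lcm_rf = Euclidean_Algorithm.Lcm"
instance by standard (simp_all add: gcd_rf_def lcm_rf_def Gcd_rf_def Lcm_rf_def)
end

instance rf :: (field) field_gcd ..

lemma bezout_rf:
  fixes a b :: "'a::field rf poly"
  assumes "coprime a b"
  shows "\<exists>s u. s * a + u * b = 1"
  using bezout_coefficients_fst_snd[of a b] assms by (metis coprime_iff_gcd_eq_1)

lemma degree_pderiv_le: "degree (pderiv p) \<le> degree p - 1"
  by (rule degree_le) (simp add: coeff_pderiv coeff_eq_0)

lemma eval_w: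
  fixes h :: "'k::field \<Rightarrow> 'b::field" and \<delta> :: "'k \<Rightarrow> 'k"
  assumes h: "is_rhom h" and Dd: "is_der Dh" and comm: "\<And>c. Dh (h c) = h (\<delta> c)"
    and d0: "\<delta> 0 = 0"
    and bez: "s * p0 + u * pderiv p0 = 1"
    and k: "pderiv p0 * w0 + map_poly \<delta> p0 = p0 * k0"
    and root: "poly (map_poly h p0) y = 0"
  shows "Dh y = poly (map_poly h w0) y" "poly (map_poly h (pderiv p0)) y \<noteq> 0"
proof -
  note hm = map_poly_rhom_add[OF h] map_poly_rhom_mult[OF h] map_poly_rhom_1[OF h]
  have "poly (map_poly h (s * p0 + u * pderiv p0)) y = 1" using bez hm by simp
  hence b: "poly (map_poly h u) y * poly (map_poly h (pderiv p0)) y = 1"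
    using root by (simp add: hm)
  thus nz: "poly (map_poly h (pderiv p0)) y \<noteq> 0" by auto
  have "poly (map_poly h (pderiv p0 * w0 + map_poly \<delta> p0)) y = poly (map_poly h (p0 * k0)) y"
    using k by simp
  hence kk: "poly (map_poly h (pderiv p0)) y * poly (map_poly h w0) y + poly (map_poly h (map_poly \<delta> p0)) y = 0"
    using root by (simp add: hm)
  have "Dh (poly (map_poly h p0) y) = poly (map_poly Dh (map_poly h p0)) y + poly (pderiv (map_poly h p0)) y * Dh y"
    by (rule der_poly[OF Dd])
  also have "map_poly Dh (map_poly h p0) = map_poly h (map_poly \<delta> p0)"
    by (rule poly_eqI) (simp add: coeff_map_poly is_rhomD(1)[OF h] der_0[OF Dd] d0 comm)
  also have "pderiv (map_poly h p0) = map_poly h (pderiv p0)"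
    by (simp add: map_poly_rhom_pderiv[OF h])
  finally have e1: "0 = poly (map_poly h (map_poly \<delta> p0)) y + poly (map_poly h (pderiv p0)) y * Dh y"
    using root der_0[OF Dd] by simp
  have "poly (map_poly h (map_poly \<delta> p0)) y + poly (map_poly h (pderiv p0)) y * Dh y
     = poly (map_poly h (map_poly \<delta> p0)) y + poly (map_poly h (pderiv p0)) y * poly (map_poly h w0) y"
    using e1 kk by (simp add: algebra_simps)
  hence "poly (map_poly h (pderiv p0)) y * Dh y = poly (map_poly h (pderiv p0)) y * poly (map_poly h w0) y"
    by simp
  thus "Dh y = poly (map_poly h w0) y" using nz by simp
qed

lemma poly_deg2:
  fixes q :: "'a::comm_ring_1 poly"
  assumes "degree q \<le> 2"
  shows "poly q x = coeff q 2 * x^2 + coeff q 1 * x + coeff q 0"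
proof -
  have "poly q x = (\<Sum>i\<le>degree q. coeff q i * x ^ i)" by (simp add: poly_altdef)
  also have "\<dots> = (\<Sum>i\<le>2. coeff q i * x ^ i)"
    by (rule sum.mono_neutral_left) (use assms in \<open>auto simp: coeff_eq_0\<close>)
  also have "\<dots> = coeff q 2 * x^2 + coeff q 1 * x + coeff q 0"
    by (simp add: numeral_2_eq_2 algebra_simps)
  finally show ?thesis .
qed

lemma cross_ratio_der:
  fixes D :: "'a::field \<Rightarrow> 'a"
  assumes Dd: "is_der D" and dist: "distinct [g1, g2, g3, g4]"
  shows "D (cross_ratio g1 g2 g3 g4) =
    (((D g1 - D g3) * (g2 - g4) + (g1 - g3) * (D g2 - D g4)) * ((g1 - g4) * (g2 - g3))
     - ((g1 - g3) * (g2 - g4)) * ((D g1 - D g4) * (g2 - g3) + (g1 - g4) * (D g2 - D g3)))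
     / ((g1 - g4) * (g2 - g3))^2"
proof -
  have nz: "(g1 - g4) * (g2 - g3) \<noteq> 0" using dist by auto
  have d1: "D ((g1 - g3) * (g2 - g4)) = (D g1 - D g3) * (g2 - g4) + (g1 - g3) * (D g2 - D g4)"
    by (simp add: is_derD[OF Dd] der_diff[OF Dd] algebra_simps)
  have d2: "D ((g1 - g4) * (g2 - g3)) = (D g1 - D g4) * (g2 - g3) + (g1 - g4) * (D g2 - D g3)"
    by (simp add: is_derD[OF Dd] der_diff[OF Dd] algebra_simps)
  show ?thesis unfolding cross_ratio_def der_divide[OF Dd nz] d1 d2 ..
qed

lemma cross_ratio_riccati:
  fixes D :: "'a::field \<Rightarrow> 'a"
  assumes Dd: "is_der D" and dist: "distinct [g1, g2, g3, g4]"
    and r1: "D g1 = A * g1^2 + B * g1 + C"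
    and r2: "D g2 = A * g2^2 + B * g2 + C"
    and r3: "D g3 = A * g3^2 + B * g3 + C"
  shows "D (cross_ratio g1 g2 g3 g4) =
     (D g4 - (A * g4^2 + B * g4 + C)) * ((g1 - g3) * (g2 - g3) * (g2 - g1)) / ((g1 - g4) * (g2 - g3))^2"
proof -
  define e where "e = D g4 - (A * g4^2 + B * g4 + C)"
  have r4: "D g4 = A * g4^2 + B * g4 + C + e" unfolding e_def by simp
  show ?thesis unfolding cross_ratio_der[OF Dd dist] r1 r2 r3 r4 e_def[symmetric]
    by (rule arg_cong[where f = "\<lambda>x. x / _"]) (simp add: algebra_simps power2_eq_square)
qed

lemma lagrange3:
  fixes g1 g2 g3 y1 y2 y3 :: "'a::field"
  assumes "distinct [g1, g2, g3]"
  shows "\<exists>Q. degree Q \<le> 2 \<and> poly Q g1 = y1 \<and> poly Q g2 = y2 \<and> poly Q g3 = y3"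
proof -
  have l: "degree ([:-a, 1:] * [:-b, 1:]) \<le> 2" for a b :: 'a
    using degree_mult_le[of "[:-a, 1:]" "[:-b, 1:]"] by simp
  define c1 where "c1 = y1/((g1-g2)*(g1-g3))"
  define c2 where "c2 = y2/((g2-g1)*(g2-g3))"
  define c3 where "c3 = y3/((g3-g1)*(g3-g2))"
  define Q where "Q = smult c1 ([:-g2,1:]*[:-g3,1:])
     + smult c2 ([:-g1,1:]*[:-g3,1:]) + smult c3 ([:-g1,1:]*[:-g2,1:])"
  have "degree Q \<le> 2"
    unfolding Q_def
    by (intro degree_add_le order.trans[OF degree_smult_le l])
  have ev: "poly Q x = c1*((x-g2)*(x-g3)) + c2*((x-g1)*(x-g3)) + c3*((x-g1)*(x-g2))" for x
    by (simp add: Q_def algebra_simps)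
  have nz: "g1 - g2 \<noteq> 0" "g1 - g3 \<noteq> 0" "g2 - g1 \<noteq> 0" "g2 - g3 \<noteq> 0" "g3 - g1 \<noteq> 0" "g3 - g2 \<noteq> 0"
    using assms by auto
  have "poly Q g1 = y1" "poly Q g2 = y2" "poly Q g3 = y3"
    using ev[of g1] ev[of g2] ev[of g3] nz by (simp_all add: c1_def c2_def c3_def)
  with \<open>degree Q \<le> 2\<close> show ?thesis by blast
qed

lemma degree_quad_le: "degree [:x, y, z:] \<le> 2"
  by (rule degree_le) (auto simp: coeff_pCons split: nat.split)

lemma degree_prod_linear:
  fixes rs :: "'a::idom list"
  shows "degree (\<Prod>r\<leftarrow>rs. [:- r, 1:]) = length rs"
proof (induction rs)
  case Nil then show ?case by simp
next
  case (Cons r rs)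
  have nz: "(\<Prod>r\<leftarrow>rs. [:- r, 1:]) \<noteq> 0" by (auto simp: prod_list_zero_iff)
  have "degree ([:- r, 1:] * (\<Prod>r\<leftarrow>rs. [:- r, 1:])) = degree [:- r, 1:] + degree (\<Prod>r\<leftarrow>rs. [:- r, 1:])"
    by (rule degree_mult_eq) (use nz in auto)
  thus ?case using Cons by simp
qed

lemma poly_prod_linear:
  fixes rs :: "'a::idom list"
  shows "poly (\<Prod>r\<leftarrow>rs. [:- r, 1:]) x = 0 \<longleftrightarrow> x \<in> set rs"
  by (induction rs) auto

theorem mainTheorem7:
  fixes \<beta> :: "'f::{field,finite} fls"
    and d :: nat
    and p :: "'f fls poly"
    and \<phi> :: "'f fls \<Rightarrow> 'L::field"
    and D :: "'L \<Rightarrow> 'L"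
  assumes "algebraic_of_degree_t \<beta> d"
    and "is_min_poly_t p \<beta>"
    and "is_splitting_field_t \<phi> p"
    and "derivation_extending \<phi> D"
  shows "(\<exists>a\<in>ratfun_t. \<exists>b\<in>ratfun_t. \<exists>c\<in>ratfun_t. deriv_t \<beta> = a * \<beta>^2 + b * \<beta> + c)
     \<longleftrightarrow> (\<forall>b1 b2 b3 b4. poly (map_poly \<phi> p) b1 = 0 \<and> poly (map_poly \<phi> p) b2 = 0 \<and>
              poly (map_poly \<phi> p) b3 = 0 \<and> poly (map_poly \<phi> p) b4 = 0 \<and>
              distinct [b1, b2, b3, b4] \<longrightarrow> D (cross_ratio b1 b2 b3 b4) = 0)"
proof -
  note mp = assms(2)
  note P = min_poly_props[OF mp]
  define n where "n = degree p"
  have n1: "n \<ge> 1" using min_poly_degree_pos[OF mp] n_def by simp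
  have hom: "ratfun_hom \<phi>" and spl: "splits (map_poly \<phi> p)"
    using assms(3) by (auto simp: is_splitting_field_t_def)
  have Dd: "is_der D" using assms(4) by (auto simp: derivation_extending_def is_der_def)
  have Dphi: "\<And>x. x \<in> ratfun_t \<Longrightarrow> D (\<phi> x) = \<phi> (deriv_t x)"
    using assms(4) by (auto simp: derivation_extending_def)
  define \<psi> where "\<psi> = \<phi> \<circ> rep_rf"
  have h\<psi>: "is_rhom \<psi>"
    unfolding is_rhom_def \<psi>_def using hom rep_rf_in
    by (auto simp: ratfun_hom_def zero_rf.rep_eq one_rf.rep_eq plus_rf.rep_eq times_rf.rep_eq)
  define \<delta> :: "'f rf \<Rightarrow> 'f rf" where "\<delta> = (\<lambda>x. abs_rf (deriv_t (rep_rf x)))"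
  have r\<delta>: "deriv_t (rep_rf c) = rep_rf (\<delta> c)" for c
    unfolding \<delta>_def by (rule rep_abs_rf[OF ratfun_t_deriv[OF rep_rf_in], symmetric])
  have \<delta>0: "\<delta> 0 = 0"
    using r\<delta>[of 0] is_rhomD(1)[OF rhom_rep_rf] der_0[OF is_der_deriv_t] rep_rf_0_iff by metis
  have comm\<psi>: "D (\<psi> c) = \<psi> (\<delta> c)" for c
    unfolding \<psi>_def using Dphi[OF rep_rf_in] r\<delta> by simp
  have abs0: "abs_rf 0 = 0"
    by (metis rep_rf_0_iff rep_abs_rf ratfun_t_0)
  define p0 where "p0 = map_poly abs_rf p"
  have pp0: "map_poly rep_rf p0 = p"
    by (rule poly_eqI) (simp add: p0_def coeff_map_poly abs0 rep_abs_rf P(3) is_rhomD(1)[OF rhom_rep_rf])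
  have degR: "degree (map_poly rep_rf q) = degree q" for q :: "'f rf poly"
    by (rule degree_map_poly) (simp add: rep_rf_0_iff)
  have deg\<psi>: "degree (map_poly \<psi> q) = degree q" for q
    by (rule degree_map_poly) (simp add: rhom_inj[OF h\<psi>])
  have dp0: "degree p0 = n" using degR[of p0] pp0 n_def by simp
  have p0nz: "p0 \<noteq> 0" using pp0 P(1) by auto
  have mapR0: "map_poly rep_rf q = 0 \<longleftrightarrow> q = 0" for q :: "'f rf poly"
    by (rule map_poly_eq_0_iff) (auto simp: rep_rf_0_iff is_rhomD(1)[OF rhom_rep_rf])
  have min0: "n \<le> degree q" if "q \<noteq> 0" "poly (map_poly rep_rf q) \<beta> = 0" for q
  proof -
    have "degree p \<le> degree (map_poly rep_rf q)"
      by (rule P(5)) (use that mapR0 in \<open>auto simp: coeff_map_poly is_rhomD(1)[OF rhom_rep_rf] rep_rf_in\<close>)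
    thus ?thesis using degR n_def by simp
  qed
  have pd: "pderiv p0 \<noteq> 0"
  proof
    assume "pderiv p0 = 0"
    hence "map_poly rep_rf (pderiv p0) = 0" by simp
    hence "pderiv p = 0" using pp0 by (simp add: map_poly_rhom_pderiv[OF rhom_rep_rf])
    thus False using minpoly_pderiv_nonzero[OF mp] by simp
  qed
  have degpd: "degree (pderiv p0) < n"
    using degree_pderiv_le[of p0] dp0 n1 by simp
  have cop: "coprime p0 (pderiv p0)"
  proof -
    define g where "g = gcd p0 (pderiv p0)"
    have gd: "g dvd p0" "g dvd pderiv p0" unfolding g_def by auto
    have gnz: "g \<noteq> 0" using p0nz g_def by simp
    have dg: "degree g \<le> degree (pderiv p0)" by (rule dvd_imp_degree_le[OF gd(2) pd])
    obtain k where k: "p0 = g * k" using gd(1) by blast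
    have knz: "k \<noteq> 0" using k p0nz by auto
    have "map_poly rep_rf g * map_poly rep_rf k = p"
      using pp0 k by (simp add: map_poly_rhom_mult[OF rhom_rep_rf])
    hence "poly (map_poly rep_rf g) \<beta> * poly (map_poly rep_rf k) \<beta> = 0"
      using P(4) by (metis poly_mult)
    moreover have "poly (map_poly rep_rf g) \<beta> \<noteq> 0"
      using min0[OF gnz] dg degpd by auto
    ultimately have "poly (map_poly rep_rf k) \<beta> = 0" by simp
    hence "n \<le> degree k" by (rule min0[OF knz])
    moreover have "degree p0 = degree g + degree k" using k gnz knz by (simp add: degree_mult_eq)
    ultimately have "degree g = 0" using dp0 by simp
    hence "is_unit g" using gnz by (simp add: is_unit_iff_degree)
    thus ?thesis unfolding g_def by (metis is_unit_gcd)
  qed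
  obtain s u where bez: "s * p0 + u * pderiv p0 = 1" using bezout_rf[OF cop] by blast
  define w0 where "w0 = (- (map_poly \<delta> p0 * u)) mod p0"
  define k0 where "k0 = map_poly \<delta> p0 * s - pderiv p0 * ((- (map_poly \<delta> p0 * u)) div p0)"
  have k: "pderiv p0 * w0 + map_poly \<delta> p0 = p0 * k0"
  proof -
    have e: "w0 = - (map_poly \<delta> p0 * u) - (- (map_poly \<delta> p0 * u)) div p0 * p0"
      using div_mult_mod_eq[of "- (map_poly \<delta> p0 * u)" p0] unfolding w0_def
      by (metis add_diff_cancel_left')
    show ?thesis unfolding k0_def e using bez by algebra
  qed
  have wdeg: "degree w0 < n"
    using degree_mod_less[OF p0nz, of "- (map_poly \<delta> p0 * u)"] dp0 n1 unfolding w0_def by auto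
  have betaw: "deriv_t \<beta> = poly (map_poly rep_rf w0) \<beta>"
    by (rule eval_w(1)[OF rhom_rep_rf is_der_deriv_t r\<delta> \<delta>0 bez k]) (use pp0 P(4) in simp)
  have p\<psi>: "map_poly \<phi> p = map_poly \<psi> p0"
    unfolding pp0[symmetric] \<psi>_def
    by (rule map_poly_map_poly) (use hom is_rhomD(1)[OF rhom_rep_rf] in \<open>auto simp: ratfun_hom_def\<close>)
  define Rt where "Rt = {x. poly (map_poly \<phi> p) x = 0}"
  have gamw: "D y = poly (map_poly \<psi> w0) y" if "y \<in> Rt" for y
    by (rule eval_w(1)[OF h\<psi> Dd comm\<psi> \<delta>0 bez k]) (use that p\<psi> in \<open>simp add: Rt_def\<close>)
  have gamnz: "poly (map_poly \<psi> (pderiv p0)) y \<noteq> 0" if "y \<in> Rt" for y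
    by (rule eval_w(2)[OF h\<psi> Dd comm\<psi> \<delta>0 bez k]) (use that p\<psi> in \<open>simp add: Rt_def\<close>)
  have Pnz: "map_poly \<phi> p \<noteq> 0"
    using p\<psi> deg\<psi>[of p0] dp0 n1 by auto
  obtain c rs where crs: "map_poly \<phi> p = smult c (\<Prod>r\<leftarrow>rs. [:- r, 1:])"
    using spl unfolding splits_def by blast
  have cnz: "c \<noteq> 0" using crs Pnz by auto
  have lrs: "length rs = n"
    using crs cnz p\<psi> deg\<psi>[of p0] dp0 by (simp add: degree_prod_linear)
  have Rts: "Rt = set rs"
    unfolding Rt_def crs using cnz by (auto simp: poly_prod_linear)
  have drs: "distinct rs"
  proof (rule ccontr)
    assume "\<not> distinct rs"
    then obtain xs ys zs r where rs: "rs = xs @ [r] @ ys @ [r] @ zs"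
      using not_distinct_decomp by blast
    define H where "H = smult c ((\<Prod>r\<leftarrow>xs. [:- r, 1:]) * (\<Prod>r\<leftarrow>ys. [:- r, 1:]) * (\<Prod>r\<leftarrow>zs. [:- r, 1:]))"
    have fac: "map_poly \<phi> p = [:- r, 1:] * ([:- r, 1:] * H)"
      unfolding crs rs H_def by (simp add: algebra_simps)
    have "r \<in> Rt" unfolding Rts rs by simp
    hence "poly (pderiv (map_poly \<phi> p)) r \<noteq> 0"
      using gamnz[of r] p\<psi> by (simp add: map_poly_rhom_pderiv[OF h\<psi>])
    moreover have "poly (pderiv (map_poly \<phi> p)) r = 0"
    proof -
      have l0: "poly [:- r, 1:] r = 0" by simp
      show ?thesis unfolding fac pderiv_mult poly_add poly_mult l0 by simp
    qed
    ultimately show False by simp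
  qed
  have cardRt: "card Rt = n" using Rts drs lrs by (simp add: distinct_card)
  have LHS: "(\<exists>a\<in>ratfun_t. \<exists>b\<in>ratfun_t. \<exists>c\<in>ratfun_t. deriv_t \<beta> = a * \<beta>^2 + b * \<beta> + c)
      \<longleftrightarrow> degree w0 \<le> 2"
  proof
    assume "degree w0 \<le> 2"
    hence "deriv_t \<beta> = rep_rf (coeff w0 2) * \<beta>^2 + rep_rf (coeff w0 1) * \<beta> + rep_rf (coeff w0 0)"
      unfolding betaw using poly_deg2[of "map_poly rep_rf w0" \<beta>] degR[of w0]
      by (simp add: coeff_map_poly is_rhomD(1)[OF rhom_rep_rf])
    thus "\<exists>a\<in>ratfun_t. \<exists>b\<in>ratfun_t. \<exists>c\<in>ratfun_t. deriv_t \<beta> = a * \<beta>^2 + b * \<beta> + c"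
      using rep_rf_in by blast
  next
    assume "\<exists>a\<in>ratfun_t. \<exists>b\<in>ratfun_t. \<exists>c\<in>ratfun_t. deriv_t \<beta> = a * \<beta>^2 + b * \<beta> + c"
    then obtain a b c where abc: "a \<in> ratfun_t" "b \<in> ratfun_t" "c \<in> ratfun_t"
      "deriv_t \<beta> = a * \<beta>^2 + b * \<beta> + c" by blast
    define Q0 where "Q0 = [:abs_rf c, abs_rf b, abs_rf a:]"
    have "map_poly rep_rf Q0 = [:c, b, a:]"
      unfolding Q0_def using abc
      by (simp add: map_poly_pCons is_rhomD(1)[OF rhom_rep_rf] rep_abs_rf)
    hence "poly (map_poly rep_rf Q0) \<beta> = deriv_t \<beta>"
      using abc(4) by (simp add: algebra_simps power2_eq_square)
    hence z: "poly (map_poly rep_rf (w0 - Q0)) \<beta> = 0"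
      using betaw by (simp add: map_poly_rhom_diff[OF rhom_rep_rf])
    have dQ: "degree Q0 \<le> 2" unfolding Q0_def by (rule degree_quad_le)
    show "degree w0 \<le> 2"
    proof (cases "w0 = Q0")
      case True then show ?thesis using dQ by simp
    next
      case False
      hence "n \<le> degree (w0 - Q0)" using min0 z by simp
      also have "\<dots> \<le> max (degree w0) (degree Q0)" by (rule degree_diff_le_max)
      finally show ?thesis using wdeg dQ by simp
    qed
  qed
  have RHS: "(\<forall>b1 b2 b3 b4. poly (map_poly \<phi> p) b1 = 0 \<and> poly (map_poly \<phi> p) b2 = 0 \<and>
              poly (map_poly \<phi> p) b3 = 0 \<and> poly (map_poly \<phi> p) b4 = 0 \<and>
              distinct [b1, b2, b3, b4] \<longrightarrow> D (cross_ratio b1 b2 b3 b4) = 0)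
      \<longleftrightarrow> degree w0 \<le> 2"
  proof
    assume dw: "degree w0 \<le> 2"
    define A where "A = \<psi> (coeff w0 2)"
    define B where "B = \<psi> (coeff w0 1)"
    define C where "C = \<psi> (coeff w0 0)"
    have ric: "D y = A * y^2 + B * y + C" if "y \<in> Rt" for y
      unfolding gamw[OF that] A_def B_def C_def
      using poly_deg2[of "map_poly \<psi> w0" y] deg\<psi>[of w0] dw
      by (simp add: coeff_map_poly is_rhomD(1)[OF h\<psi>])
    show "\<forall>b1 b2 b3 b4. poly (map_poly \<phi> p) b1 = 0 \<and> poly (map_poly \<phi> p) b2 = 0 \<and>
              poly (map_poly \<phi> p) b3 = 0 \<and> poly (map_poly \<phi> p) b4 = 0 \<and>
              distinct [b1, b2, b3, b4] \<longrightarrow> D (cross_ratio b1 b2 b3 b4) = 0"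
    proof (intro allI impI)
      fix b1 b2 b3 b4
      assume H: "poly (map_poly \<phi> p) b1 = 0 \<and> poly (map_poly \<phi> p) b2 = 0 \<and>
              poly (map_poly \<phi> p) b3 = 0 \<and> poly (map_poly \<phi> p) b4 = 0 \<and> distinct [b1, b2, b3, b4]"
      hence inR: "b1 \<in> Rt" "b2 \<in> Rt" "b3 \<in> Rt" "b4 \<in> Rt" by (auto simp: Rt_def)
      show "D (cross_ratio b1 b2 b3 b4) = 0"
        using cross_ratio_riccati[OF Dd _ ric[OF inR(1)] ric[OF inR(2)] ric[OF inR(3)]] H ric[OF inR(4)]
        by simp
    qed
  next
    assume R: "\<forall>b1 b2 b3 b4. poly (map_poly \<phi> p) b1 = 0 \<and> poly (map_poly \<phi> p) b2 = 0 \<and>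
              poly (map_poly \<phi> p) b3 = 0 \<and> poly (map_poly \<phi> p) b4 = 0 \<and>
              distinct [b1, b2, b3, b4] \<longrightarrow> D (cross_ratio b1 b2 b3 b4) = 0"
    show "degree w0 \<le> 2"
    proof (cases "n \<le> 3")
      case True then show ?thesis using wdeg by simp
    next
      case False
      define g1 where "g1 = rs ! 0"
      define g2 where "g2 = rs ! 1"
      define g3 where "g3 = rs ! 2"
      have gR: "g1 \<in> Rt" "g2 \<in> Rt" "g3 \<in> Rt"
        unfolding Rts g1_def g2_def g3_def using False lrs by auto
      have gd: "distinct [g1, g2, g3]"
        unfolding g1_def g2_def g3_def using False lrs drs by (auto simp: nth_eq_iff_index_eq)
      obtain Q where Q: "degree Q \<le> 2" "poly Q g1 = D g1" "poly Q g2 = D g2" "poly Q g3 = D g3"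
        using lagrange3[OF gd] by blast
      define A where "A = coeff Q 2"
      define B where "B = coeff Q 1"
      define C where "C = coeff Q 0"
      have Qe: "poly Q y = A * y^2 + B * y + C" for y
        unfolding A_def B_def C_def by (rule poly_deg2[OF Q(1)])
      have allr: "D y = poly Q y" if "y \<in> Rt" for y
      proof (cases "y \<in> {g1, g2, g3}")
        case True then show ?thesis using Q by auto
      next
        case False
        have dist4: "distinct [g1, g2, g3, y]" using gd False by auto
        have "D (cross_ratio g1 g2 g3 y) = 0"
          using R gR that dist4 by (auto simp: Rt_def)
        moreover have "D (cross_ratio g1 g2 g3 y) =
           (D y - (A * y^2 + B * y + C)) * ((g1 - g3) * (g2 - g3) * (g2 - g1)) / ((g1 - y) * (g2 - g3))^2"
          by (rule cross_ratio_riccati[OF Dd dist4]) (use Q Qe in auto)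
        moreover have "((g1 - g3) * (g2 - g3) * (g2 - g1)) \<noteq> 0" "((g1 - y) * (g2 - g3))^2 \<noteq> 0"
          using dist4 by auto
        ultimately show ?thesis using Qe[of y] by simp
      qed
      have "map_poly \<psi> w0 = Q"
      proof (rule poly_eqI_degree[of Rt])
        show "\<And>x. x \<in> Rt \<Longrightarrow> poly (map_poly \<psi> w0) x = poly Q x"
          using gamw allr by simp
        show "degree (map_poly \<psi> w0) < card Rt" using deg\<psi> wdeg cardRt by simp
        show "degree Q < card Rt" using Q(1) cardRt False by simp
      qed
      thus ?thesis using deg\<psi>[of w0] Q(1) by simp
    qed
  qed
  show ?thesis using LHS RHS by simp
qed

end
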